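(* Let $G$ be an input tree and $H$ a TLRG with $G\Rightarrow^*_{\{r_0,r_1,r_2\}}H$. Then either $|V_H|=1$ or $H$ is not in normal form (i.e. some rule among $r_0,r_1,r_2$ is applicable to $H$).
   Context: Graphs over a label alphabet $(\mathcal L_V,\mathcal L_E)$ are tuples $G=(V,E,s,t,l,m,p)$ with $V,E$ finite, $s,t:E\to V$ total, $l:V\rightharpoonup\mathcal L_V$ partial, $m:E\to\mathcal L_E$ total, $p:V\rightharpoonup\{0,1\}$ partial (rootedness; root nodes are $p^{-1}(\{1\})$). TLRG = $l,p$ total. Morphisms preserve sources, targets, edge labels, and node labels and rootedness wherever defined. A rule $\langle L\leftarrow K\rightarrow R\rangle$ has TLRGs $L,R$ and a common subgraph $K$ (sets included, $s,t,m$ restricted, $l_K\subseteq l_L$, $p_K\subseteq p_L$, likewise for $R$). It is applied to TLRG $G$ via an injective morphism $g:L\to G$ satisfying the dangling condition (no edge outside $g(L)$ incident to a node of $g(V_L\setminus V_K)$) by deleting images of items of $L$ not in $K$ and undefining label/rootedness of $g_V(v)$ where undefined for $v\in V_K$, then adding disjointly the items of $R$ not in $K$ and setting label/rootedness of $g_V(v)$ to $l_R(v)/p_R(v)$ where undefined in $K$; $G\Rightarrow H$ when $H$ is isomorphic to the result; $\Rightarrow^*$ its reflexive-transitive closure. $\mathcal L=(\{\square,\triangle\},\{\square\})$; all edges labelled $\square$. Rule $r_0$: $L$ has an unrooted node $1$ labelled $\square$, a rooted node $2$ labelled $\square$, edge $1\to2$; $K$ is node $1$ with undefined label and rootedness;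 $R$ is node $1$ rooted labelled $\square$. Rule $r_1$: as $r_0$ but node $1$ of $L$ labelled $\triangle$. Rule $r_2$: $L$ has rooted node $1$ labelled $\square$, unrooted node $2$ labelled $\square$, edge $1\to2$; $K$ is nodes $1,2$ with undefined labels and rootedness, no edges; $R$ has node $1$ unrooted labelled $\triangle$, node $2$ rooted labelled $\square$, edge $1\to2$. An input graph is a TLRG over $\mathcal L$ with exactly one root node in which every node and edge is labelled $\square$. A tree is a non-empty graph whose underlying undirected multigraph is connected and has no undirected cycles (including loops and parallel edges), and in which every node has at most one incoming edge. An input tree is an input graph that is a tree. *)

theory Defs
  imports Main
begin

datatype nlabel = NSq | NTri
datatype elabel = ESq

text \<open>Rootedness p : V -> {0,1} is modelled as bool option
  (Some True = rooted, Some False = unrooted, None = undefined).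
  Partial labellings are option-valued; values outside the carrier are irrelevant.\<close>

record ('v, 'e) graph =
  nodes :: "'v set"
  edges :: "'e set"
  src   :: "'e \<Rightarrow> 'v"
  tgt   :: "'e \<Rightarrow> 'v"
  lab   :: "'v \<Rightarrow> nlabel option"
  elab  :: "'e \<Rightarrow> elabel"
  root  :: "'v \<Rightarrow> bool option"

definition wf_graph :: "('v, 'e) graph \<Rightarrow> bool" where
  "wf_graph G \<longleftrightarrow> finite (nodes G) \<and> finite (edges G) \<and>
     (\<forall>e\<in>edges G. src G e \<in> nodes G \<and> tgt G e \<in> nodes G)"

definition tlrg :: "('v, 'e) graph \<Rightarrow> bool" where
  "tlrg G \<longleftrightarrow> wf_graph G \<and> (\<forall>v\<in>nodes G. lab G v \<noteq> None \<and> root G v \<noteq> None)"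

definition morphism :: "('a, 'b) graph \<Rightarrow> ('v, 'e) graph \<Rightarrow> ('a \<Rightarrow> 'v) \<Rightarrow> ('b \<Rightarrow> 'e) \<Rightarrow> bool" where
  "morphism A B fV fE \<longleftrightarrow>
     fV ` nodes A \<subseteq> nodes B \<and> fE ` edges A \<subseteq> edges B \<and>
     (\<forall>e\<in>edges A. src B (fE e) = fV (src A e) \<and> tgt B (fE e) = fV (tgt A e)
                    \<and> elab B (fE e) = elab A e) \<and>
     (\<forall>v\<in>nodes A. (lab A v \<noteq> None \<longrightarrow> lab B (fV v) = lab A v) \<and>
                    (root A v \<noteq> None \<longrightarrow> root B (fV v) = root A v))"

definition graph_iso :: "('a, 'b) graph \<Rightarrow> ('v, 'e) graph \<Rightarrow> bool" where
  "graph_iso A B \<longleftrightarrow> (\<exists>fV fE.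
     bij_betw fV (nodes A) (nodes B) \<and> bij_betw fE (edges A) (edges B) \<and>
     (\<forall>e\<in>edges A. src B (fE e) = fV (src A e) \<and> tgt B (fE e) = fV (tgt A e)
                    \<and> elab B (fE e) = elab A e) \<and>
     (\<forall>v\<in>nodes A. lab B (fV v) = lab A v \<and> root B (fV v) = root A v))"

record ('a, 'b) rule =
  rL :: "('a, 'b) graph"
  rK :: "('a, 'b) graph"
  rR :: "('a, 'b) graph"

definition is_match :: "('a, 'b) rule \<Rightarrow> ('v, 'e) graph \<Rightarrow> ('a \<Rightarrow> 'v) \<Rightarrow> ('b \<Rightarrow> 'e) \<Rightarrow> bool" where
  "is_match r G gV gE \<longleftrightarrow>
     morphism (rL r) G gV gE \<and> inj_on gV (nodes (rL r)) \<and> inj_on gE (edges (rL r)) \<and>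
     (\<forall>e\<in>edges G - gE ` edges (rL r).
        src G e \<notin> gV ` (nodes (rL r) - nodes (rK r)) \<and>
        tgt G e \<notin> gV ` (nodes (rL r) - nodes (rK r)))"

text \<open>The concrete result of applying rule r at match (gV,gE): the kept part of G
  (tagged Inl) together with a disjoint copy of the items of R not in K (tagged Inr).\<close>
definition apply_rule :: "('a, 'b) rule \<Rightarrow> ('v, 'e) graph \<Rightarrow> ('a \<Rightarrow> 'v) \<Rightarrow> ('b \<Rightarrow> 'e)
    \<Rightarrow> ('v + 'a, 'e + 'b) graph" where
  "apply_rule r G gV gE =
    (let L = rL r; K = rK r; R = rR r;
         embR = (\<lambda>v. if v \<in> nodes K then Inl (gV v) else Inr v);
         preK = (\<lambda>x. inv_into (nodes K) gV x)
     in \<lparr> nodes = Inl ` (nodes G - gV ` (nodes L - nodes K)) \<union> Inr ` (nodes R - nodes K),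
          edges = Inl ` (edges G - gE ` (edges L - edges K)) \<union> Inr ` (edges R - edges K),
          src = case_sum (\<lambda>e. Inl (src G e)) (\<lambda>e. embR (src R e)),
          tgt = case_sum (\<lambda>e. Inl (tgt G e)) (\<lambda>e. embR (tgt R e)),
          lab = case_sum (\<lambda>x. if x \<in> gV ` nodes K \<and> lab K (preK x) = None
                               then lab R (preK x) else lab G x) (lab R),
          elab = case_sum (elab G) (elab R),
          root = case_sum (\<lambda>x. if x \<in> gV ` nodes K \<and> root K (preK x) = None
                               then root R (preK x) else root G x) (root R) \<rparr>)"

definition dstep :: "(nat, nat) rule set \<Rightarrow> (nat, nat) graph \<Rightarrow> (nat, nat) graph \<Rightarrow> bool" where
  "dstep rs G H \<longleftrightarrow> tlrg G \<and>
     (\<exists>r\<in>rs. \<exists>gV gE. is_match r G gV gE \<and> graph_iso (apply_rule r G gV gE) H)"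

definition r0 :: "(nat, nat) rule" where
  "r0 = \<lparr> rL = \<lparr> nodes = {1, 2}, edges = {0}, src = (\<lambda>_. 1), tgt = (\<lambda>_. 2),
                 lab = [1 \<mapsto> NSq, 2 \<mapsto> NSq], elab = (\<lambda>_. ESq), root = [1 \<mapsto> False, 2 \<mapsto> True] \<rparr>,
          rK = \<lparr> nodes = {1}, edges = {}, src = (\<lambda>_. 1), tgt = (\<lambda>_. 1),
                 lab = Map.empty, elab = (\<lambda>_. ESq), root = Map.empty \<rparr>,
          rR = \<lparr> nodes = {1}, edges = {}, src = (\<lambda>_. 1), tgt = (\<lambda>_. 1),
                 lab = [1 \<mapsto> NSq], elab = (\<lambda>_. ESq), root = [1 \<mapsto> True] \<rparr> \<rparr>"

definition r1 :: "(nat, nat) rule" where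
  "r1 = \<lparr> rL = \<lparr> nodes = {1, 2}, edges = {0}, src = (\<lambda>_. 1), tgt = (\<lambda>_. 2),
                 lab = [1 \<mapsto> NTri, 2 \<mapsto> NSq], elab = (\<lambda>_. ESq), root = [1 \<mapsto> False, 2 \<mapsto> True] \<rparr>,
          rK = \<lparr> nodes = {1}, edges = {}, src = (\<lambda>_. 1), tgt = (\<lambda>_. 1),
                 lab = Map.empty, elab = (\<lambda>_. ESq), root = Map.empty \<rparr>,
          rR = \<lparr> nodes = {1}, edges = {}, src = (\<lambda>_. 1), tgt = (\<lambda>_. 1),
                 lab = [1 \<mapsto> NSq], elab = (\<lambda>_. ESq), root = [1 \<mapsto> True] \<rparr> \<rparr>"

definition r2 :: "(nat, nat) rule" where
  "r2 = \<lparr> rL = \<lparr> nodes = {1, 2}, edges = {0}, src = (\<lambda>_. 1), tgt = (\<lambda>_. 2),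
                 lab = [1 \<mapsto> NSq, 2 \<mapsto> NSq], elab = (\<lambda>_. ESq), root = [1 \<mapsto> True, 2 \<mapsto> False] \<rparr>,
          rK = \<lparr> nodes = {1, 2}, edges = {}, src = (\<lambda>_. 1), tgt = (\<lambda>_. 1),
                 lab = Map.empty, elab = (\<lambda>_. ESq), root = Map.empty \<rparr>,
          rR = \<lparr> nodes = {1, 2}, edges = {0}, src = (\<lambda>_. 1), tgt = (\<lambda>_. 2),
                 lab = [1 \<mapsto> NTri, 2 \<mapsto> NSq], elab = (\<lambda>_. ESq), root = [1 \<mapsto> False, 2 \<mapsto> True] \<rparr> \<rparr>"

definition input_graph :: "('v, 'e) graph \<Rightarrow> bool" where
  "input_graph G \<longleftrightarrow> tlrg G \<and> card {v \<in> nodes G. root G v = Some True} = 1 \<and>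
     (\<forall>v\<in>nodes G. lab G v = Some NSq) \<and> (\<forall>e\<in>edges G. elab G e = ESq)"

fun uwalk :: "('v, 'e) graph \<Rightarrow> 'v \<Rightarrow> 'e list \<Rightarrow> 'v \<Rightarrow> bool" where
  "uwalk G x [] y \<longleftrightarrow> x = y \<and> x \<in> nodes G"
| "uwalk G x (e # es) y \<longleftrightarrow> e \<in> edges G \<and>
     ((src G e = x \<and> uwalk G (tgt G e) es y) \<or> (tgt G e = x \<and> uwalk G (src G e) es y))"

definition uconnected :: "('v, 'e) graph \<Rightarrow> bool" where
  "uconnected G \<longleftrightarrow> (\<forall>x\<in>nodes G. \<forall>y\<in>nodes G. \<exists>es. uwalk G x es y)"

text \<open>An undirected cycle (including loops and pairs of parallel edges) exists iff
  there is a non-empty closed walk using pairwise distinct edges.\<close>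
definition has_ucycle :: "('v, 'e) graph \<Rightarrow> bool" where
  "has_ucycle G \<longleftrightarrow> (\<exists>x es. es \<noteq> [] \<and> distinct es \<and> uwalk G x es x)"

definition is_tree :: "('v, 'e) graph \<Rightarrow> bool" where
  "is_tree G \<longleftrightarrow> nodes G \<noteq> {} \<and> uconnected G \<and> \<not> has_ucycle G \<and>
     (\<forall>v\<in>nodes G. card {e \<in> edges G. tgt G e = v} \<le> 1)"

definition input_tree :: "('v, 'e) graph \<Rightarrow> bool" where
  "input_tree G \<longleftrightarrow> input_graph G \<and> is_tree G"

end

theory Submission
  imports Defs
begin

fun dwalk :: "('v, 'e) graph \<Rightarrow> 'v \<Rightarrow> 'e list \<Rightarrow> 'v \<Rightarrow> bool" where
  "dwalk G x [] y \<longleftrightarrow> x = y"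
| "dwalk G x (e # es) y \<longleftrightarrow> e \<in> edges G \<and> src G e = x \<and> dwalk G (tgt G e) es y"

lemma dwalk_append: "dwalk G x (p @ q) y \<longleftrightarrow> (\<exists>z. dwalk G x p z \<and> dwalk G z q y)"
  by (induction p arbitrary: x) auto

lemma dwalk_uwalk: "wf_graph G \<Longrightarrow> dwalk G x es y \<Longrightarrow> es \<noteq> [] \<Longrightarrow> uwalk G x es y"
proof (induction es arbitrary: x)
  case (Cons e es)
  then show ?case by (cases es) (auto simp: wf_graph_def)
qed simp

lemma closed_dwalk_cycle:
  "wf_graph G \<Longrightarrow> dwalk G x es x \<Longrightarrow> es \<noteq> [] \<Longrightarrow> has_ucycle G"
proof (induction "length es" arbitrary: x es rule: less_induct)
  case less
  show ?case
  proof (cases "distinct es")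
    case True thus ?thesis using less dwalk_uwalk[OF less.prems(1)] unfolding has_ucycle_def by blast
  next
    case False
    then obtain a b c y where es: "es = a @ [y] @ b @ [y] @ c" using not_distinct_decomp by blast
    from less.prems(2) es obtain z where "dwalk G z (y # (b @ [y]) @ c) x"
      by (auto simp: dwalk_append)
    then obtain z2 where w: "dwalk G (tgt G y) (b @ [y]) z2" by (auto simp: dwalk_append)
    then have "z2 = tgt G y" by (auto simp: dwalk_append)
    with w have "dwalk G (tgt G y) (b @ [y]) (tgt G y)" by simp
    moreover have "length (b @ [y]) < length es" using es by simp
    ultimately show ?thesis using less.hyps less.prems(1) by blast
  qed
qed

lemma rank_exists:
  assumes "wf_graph G" "\<not> has_ucycle G"
  shows "\<exists>d::'v \<Rightarrow> nat. \<forall>e\<in>edges G. d (src G e) < d (tgt G e)"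
proof -
  define anc where "anc v = {u \<in> nodes G. \<exists>es. es \<noteq> [] \<and> dwalk G u es v}" for v
  have fin: "finite (anc v)" for v
  proof -
    have "anc v \<subseteq> nodes G" unfolding anc_def by blast
    moreover have "finite (nodes G)" using assms(1) unfolding wf_graph_def by blast
    ultimately show ?thesis by (rule finite_subset)
  qed
  have lt: "card (anc (src G e)) < card (anc (tgt G e))" if e: "e \<in> edges G" for e
  proof -
    have sn: "src G e \<in> nodes G" "tgt G e \<in> nodes G" using assms(1) e unfolding wf_graph_def by auto
    have sub: "anc (src G e) \<subseteq> anc (tgt G e)"
    proof
      fix u assume "u \<in> anc (src G e)"
      then obtain es where u: "u \<in> nodes G" "es \<noteq> []" "dwalk G u es (src G e)" unfolding anc_def by blast
      have "dwalk G (src G e) [e] (tgt G e)" using e by simp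
      then have "dwalk G u (es @ [e]) (tgt G e)" unfolding dwalk_append using u(3) by blast
      moreover have "es @ [e] \<noteq> []" by simp
      ultimately show "u \<in> anc (tgt G e)" using u(1) unfolding anc_def by blast
    qed
    have "dwalk G (src G e) [e] (tgt G e)" using e by simp
    then have in1: "src G e \<in> anc (tgt G e)" using sn unfolding anc_def by blast
    have in2: "src G e \<notin> anc (src G e)"
    proof
      assume "src G e \<in> anc (src G e)"
      then obtain es where "es \<noteq> []" "dwalk G (src G e) es (src G e)" unfolding anc_def by blast
      then show False using closed_dwalk_cycle[OF assms(1)] assms(2) by blast
    qed
    have "anc (src G e) \<subset> anc (tgt G e)" using sub in1 in2 by blast
    then show ?thesis using fin psubset_card_mono by blast
  qed
  show ?thesis by (rule exI[of _ "\<lambda>v. card (anc v)"]) (simp add: lt)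
qed

lemma uwalk_hom:
  assumes "\<forall>e\<in>edges A. fE e \<in> edges B \<and> src B (fE e) = fV (src A e) \<and> tgt B (fE e) = fV (tgt A e)"
    "\<forall>x\<in>nodes A. fV x \<in> nodes B"
  shows "uwalk A x es y \<Longrightarrow> uwalk B (fV x) (map fE es) (fV y)"
  using assms by (induction es arbitrary: x) auto

lemma dwalk_hom:
  assumes "\<forall>e\<in>edges A. fE e \<in> edges B \<and> src B (fE e) = fV (src A e) \<and> tgt B (fE e) = fV (tgt A e)"
    "\<forall>x\<in>nodes A. fV x \<in> nodes B"
  shows "dwalk A x es y \<Longrightarrow> dwalk B (fV x) (map fE es) (fV y)"
  using assms by (induction es arbitrary: x) auto

definition ginv :: "('v, 'e) graph \<Rightarrow> bool" where
  "ginv G \<longleftrightarrow> (\<forall>e\<in>edges G. src G e \<in> nodes G \<and> tgt G e \<in> nodes G) \<and>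
    (\<forall>e1\<in>edges G. \<forall>e2\<in>edges G. tgt G e1 = tgt G e2 \<longrightarrow> e1 = e2) \<and>
    (\<exists>d::'v \<Rightarrow> nat. \<forall>e\<in>edges G. d (src G e) < d (tgt G e)) \<and>
    uconnected G \<and>
    (\<exists>\<rho>\<in>nodes G. root G \<rho> = Some True \<and> lab G \<rho> = Some NSq \<and>
       (\<forall>v\<in>nodes G. root G v = Some True \<longrightarrow> v = \<rho>) \<and>
       (\<forall>v\<in>nodes G. lab G v = Some NTri \<longrightarrow> (\<exists>es. es \<noteq> [] \<and> dwalk G v es \<rho>)))"

lemma inv_iso:
  assumes "graph_iso A B" "ginv A"
  shows "ginv B"
proof -
  obtain fV fE where bV: "bij_betw fV (nodes A) (nodes B)" and bE: "bij_betw fE (edges A) (edges B)"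
    and E: "\<forall>e\<in>edges A. src B (fE e) = fV (src A e) \<and> tgt B (fE e) = fV (tgt A e) \<and> elab B (fE e) = elab A e"
    and N: "\<forall>v\<in>nodes A. lab B (fV v) = lab A v \<and> root B (fV v) = root A v"
    using assms(1) unfolding graph_iso_def by blast
  have eB: "edges B = fE ` edges A" and nB: "nodes B = fV ` nodes A" and injV: "inj_on fV (nodes A)"
    using bV bE by (auto simp: bij_betw_def)
  have hom: "\<forall>e\<in>edges A. fE e \<in> edges B \<and> src B (fE e) = fV (src A e) \<and> tgt B (fE e) = fV (tgt A e)"
    "\<forall>x\<in>nodes A. fV x \<in> nodes B" using E eB nB by auto
  from assms(2) have I5: "\<forall>e\<in>edges A. src A e \<in> nodes A \<and> tgt A e \<in> nodes A"
    and I2: "\<forall>e1\<in>edges A. \<forall>e2\<in>edges A. tgt A e1 = tgt A e2 \<longrightarrow> e1 = e2"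
    and I4: "uconnected A" unfolding ginv_def by blast+
  from assms(2) obtain d :: "_ \<Rightarrow> nat" where I3: "\<forall>e\<in>edges A. d (src A e) < d (tgt A e)" unfolding ginv_def by blast
  from assms(2) obtain \<rho> where \<rho>: "\<rho> \<in> nodes A" "root A \<rho> = Some True" "lab A \<rho> = Some NSq"
    "\<forall>v\<in>nodes A. root A v = Some True \<longrightarrow> v = \<rho>"
    "\<forall>v\<in>nodes A. lab A v = Some NTri \<longrightarrow> (\<exists>es. es \<noteq> [] \<and> dwalk A v es \<rho>)"
    unfolding ginv_def by blast
  have J5: "\<forall>e\<in>edges B. src B e \<in> nodes B \<and> tgt B e \<in> nodes B" using I5 hom eB by auto
  have J2: "\<forall>e1\<in>edges B. \<forall>e2\<in>edges B. tgt B e1 = tgt B e2 \<longrightarrow> e1 = e2"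
  proof (intro ballI impI)
    fix e1 e2 assume "e1 \<in> edges B" "e2 \<in> edges B" "tgt B e1 = tgt B e2"
    then obtain a1 a2 where "a1 \<in> edges A" "a2 \<in> edges A" "e1 = fE a1" "e2 = fE a2"
      "fV (tgt A a1) = fV (tgt A a2)" using eB hom by auto
    moreover have "tgt A a1 = tgt A a2" using calculation injV I5 by (meson inj_on_def)
    ultimately show "e1 = e2" using I2 by blast
  qed
  have J3: "\<forall>e\<in>edges B. (d \<circ> inv_into (nodes A) fV) (src B e) < (d \<circ> inv_into (nodes A) fV) (tgt B e)"
    using I3 I5 eB hom injV by (auto simp: inv_into_f_f)
  then have J3': "\<exists>d::_\<Rightarrow>nat. \<forall>e\<in>edges B. d (src B e) < d (tgt B e)" by (rule exI[of _ "d \<circ> inv_into (nodes A) fV"])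
  have J4: "uconnected B" unfolding uconnected_def
  proof (intro ballI)
    fix x y assume "x \<in> nodes B" "y \<in> nodes B"
    then obtain a b where ab: "a \<in> nodes A" "b \<in> nodes A" "x = fV a" "y = fV b" using nB by auto
    then obtain es where "uwalk A a es b" using I4 unfolding uconnected_def by blast
    then have "uwalk B (fV a) (map fE es) (fV b)" using uwalk_hom[OF hom] by blast
    then show "\<exists>es. uwalk B x es y" using ab by blast
  qed
  have R1: "fV \<rho> \<in> nodes B" "root B (fV \<rho>) = Some True" "lab B (fV \<rho>) = Some NSq" using \<rho>(1,2,3) hom(2) N by auto
  have R2: "\<forall>v\<in>nodes B. root B v = Some True \<longrightarrow> v = fV \<rho>"
  proof (intro ballI impI)
    fix v assume v: "v \<in> nodes B" "root B v = Some True"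
    then obtain a where a: "a \<in> nodes A" "v = fV a" using nB by auto
    then have "root A a = Some True" using N v(2) by auto
    then show "v = fV \<rho>" using \<rho>(4) a by auto
  qed
  have R3: "\<forall>v\<in>nodes B. lab B v = Some NTri \<longrightarrow> (\<exists>es. es \<noteq> [] \<and> dwalk B v es (fV \<rho>))"
  proof (intro ballI impI)
    fix v assume v: "v \<in> nodes B" "lab B v = Some NTri"
    then obtain a where a: "a \<in> nodes A" "v = fV a" using nB by auto
    then have "lab A a = Some NTri" using N v(2) by auto
    then obtain es where es: "es \<noteq> []" "dwalk A a es \<rho>" using \<rho>(5) a(1) by blast
    then have "dwalk B (fV a) (map fE es) (fV \<rho>)" using dwalk_hom[OF hom] by blast
    moreover have "map fE es \<noteq> []" using es(1) by simp
    ultimately show "\<exists>es. es \<noteq> [] \<and> dwalk B v es (fV \<rho>)" using a(2) by blast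
  qed
  have J6: "\<exists>\<rho>\<in>nodes B. root B \<rho> = Some True \<and> lab B \<rho> = Some NSq \<and>
       (\<forall>v\<in>nodes B. root B v = Some True \<longrightarrow> v = \<rho>) \<and>
       (\<forall>v\<in>nodes B. lab B v = Some NTri \<longrightarrow> (\<exists>es. es \<noteq> [] \<and> dwalk B v es \<rho>))"
    using R1 R2 R3 by blast
  show ?thesis unfolding ginv_def using J2 J3' J4 J5 J6 by blast
qed


abbreviation del_graph :: "('v, 'e) graph \<Rightarrow> 'v \<Rightarrow> 'e \<Rightarrow> ('v, 'e) graph" where
  "del_graph G v e \<equiv> G\<lparr>nodes := nodes G - {v}, edges := edges G - {e}\<rparr>"

lemma uwalk_detour:
  fixes G :: "('v, 'e) graph"
  assumes e: "e \<in> edges G" "src G e = u" "tgt G e = v" "u \<noteq> v"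
    and dang: "\<forall>e'\<in>edges G. e' \<noteq> e \<longrightarrow> src G e' \<noteq> v \<and> tgt G e' \<noteq> v"
  shows "uwalk G x es y \<Longrightarrow> x \<noteq> v \<Longrightarrow> y \<noteq> v \<Longrightarrow> \<exists>es'. uwalk (del_graph G v e) x es' y"
proof (induction "length es" arbitrary: x es rule: less_induct)
  case less
  show ?case
  proof (cases es)
    case Nil thus ?thesis using less.prems by (intro exI[of _ "[]"]) auto
  next
    case (Cons e1 rest)
    show ?thesis
    proof (cases "e1 = e")
      case False
      obtain z where z: "uwalk G z rest y"
        and step: "(src G e1 = x \<and> tgt G e1 = z) \<or> (tgt G e1 = x \<and> src G e1 = z)"
        and e1: "e1 \<in> edges G" using less.prems(1) Cons by auto
      have "z \<noteq> v" using dang e1 False step by auto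
      then obtain es' where "uwalk (del_graph G v e) z es' y"
        using less.hyps[of rest z] z less.prems Cons by auto
      then have "uwalk (del_graph G v e) x (e1 # es') y" using step e1 False by auto
      thus ?thesis by blast
    next
      case True
      then have x: "x = u" and r: "uwalk G v rest y" using less.prems Cons e by auto
      then obtain e2 rest' where rest: "rest = e2 # rest'" using less.prems(3) by (cases rest) auto
      have "e2 = e" using r rest dang by auto
      then have "uwalk G u rest' y" using r rest e by auto
      then show ?thesis using less.hyps[of rest' u] Cons rest x less.prems by auto
    qed
  qed
qed

lemma dwalk_restrict:
  fixes G :: "('v, 'e) graph"
  assumes e: "e \<in> edges G" "src G e = u" "tgt G e = v" "u \<noteq> v"
    and dang: "\<forall>e'\<in>edges G. e' \<noteq> e \<longrightarrow> src G e' \<noteq> v \<and> tgt G e' \<noteq> v"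
  shows "dwalk G x es y \<Longrightarrow> y \<noteq> v \<Longrightarrow> dwalk (del_graph G v e) x es y"
proof (induction es arbitrary: x)
  case (Cons e1 rest)
  have "e1 \<noteq> e"
  proof
    assume "e1 = e"
    then have "dwalk G v rest y" using Cons e by auto
    with Cons.prems(2) obtain e2 rest' where "rest = e2 # rest'" "e2 \<in> edges G" "src G e2 = v"
      by (cases rest) auto
    then show False using dang e by auto
  qed
  then show ?case using Cons by auto
qed simp

lemma inv_leafdel:
  fixes G :: "('v, 'e) graph" and A :: "('v + 'a, 'e + 'b) graph"
  assumes ginv: "ginv G" and wf: "wf_graph G"
    and uv: "u \<in> nodes G" "v \<in> nodes G" "u \<noteq> v"
    and e: "e \<in> edges G" "src G e = u" "tgt G e = v"
    and rv: "root G v = Some True"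
    and dang: "\<forall>e'\<in>edges G. e' \<noteq> e \<longrightarrow> src G e' \<noteq> v \<and> tgt G e' \<noteq> v"
    and nA: "nodes A = Inl ` (nodes G - {v})"
    and eA: "edges A = Inl ` (edges G - {e})"
    and sA: "\<And>e'. src A (Inl e') = Inl (src G e')"
    and tA: "\<And>e'. tgt A (Inl e') = Inl (tgt G e')"
    and lA: "\<And>x. lab A (Inl x) = (if x = u then Some NSq else lab G x)"
    and rA: "\<And>x. root A (Inl x) = (if x = u then Some True else root G x)"
  shows "ginv A"
proof -
  let ?G' = "del_graph G v e"
  have hom: "\<forall>e'\<in>edges ?G'. Inl e' \<in> edges A \<and> src A (Inl e') = Inl (src ?G' e') \<and> tgt A (Inl e') = Inl (tgt ?G' e')"
    "\<forall>x\<in>nodes ?G'. Inl x \<in> nodes A" using nA eA sA tA by auto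
  from ginv have I5: "\<forall>e\<in>edges G. src G e \<in> nodes G \<and> tgt G e \<in> nodes G"
    and I2: "\<forall>e1\<in>edges G. \<forall>e2\<in>edges G. tgt G e1 = tgt G e2 \<longrightarrow> e1 = e2"
    and I4: "uconnected G" unfolding ginv_def by blast+
  from ginv obtain d :: "_ \<Rightarrow> nat" where I3: "\<forall>e\<in>edges G. d (src G e) < d (tgt G e)" unfolding ginv_def by blast
  from ginv obtain \<rho> where \<rho>: "\<rho> \<in> nodes G" "root G \<rho> = Some True" "lab G \<rho> = Some NSq"
    "\<forall>v\<in>nodes G. root G v = Some True \<longrightarrow> v = \<rho>"
    "\<forall>v\<in>nodes G. lab G v = Some NTri \<longrightarrow> (\<exists>es. es \<noteq> [] \<and> dwalk G v es \<rho>)"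
    unfolding ginv_def by blast
  have v\<rho>: "v = \<rho>" using \<rho>(4) rv uv(2) by blast
  have J5: "\<forall>e\<in>edges A. src A e \<in> nodes A \<and> tgt A e \<in> nodes A" using I5 eA nA sA tA dang by auto
  have J2: "\<forall>e1\<in>edges A. \<forall>e2\<in>edges A. tgt A e1 = tgt A e2 \<longrightarrow> e1 = e2" using I2 eA tA by auto
  have J3: "\<forall>e\<in>edges A. (case_sum d (\<lambda>_. 0)) (src A e) < (case_sum d (\<lambda>_. 0)) (tgt A e)"
    using I3 eA sA tA by auto
  then have J3': "\<exists>d::_\<Rightarrow>nat. \<forall>e\<in>edges A. d (src A e) < d (tgt A e)" by (rule exI[of _ "case_sum d (\<lambda>_. 0)"])
  have J4: "uconnected A" unfolding uconnected_def
  proof (intro ballI)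
    fix x y assume "x \<in> nodes A" "y \<in> nodes A"
    then obtain a b where ab: "a \<in> nodes G" "b \<in> nodes G" "a \<noteq> v" "b \<noteq> v" "x = Inl a" "y = Inl b" using nA by auto
    then obtain es where "uwalk G a es b" using I4 unfolding uconnected_def by blast
    then obtain es' where "uwalk ?G' a es' b" using uwalk_detour[OF e(1,2,3) uv(3) dang] ab by blast
    then show "\<exists>es. uwalk A x es y" using uwalk_hom[OF hom] ab by blast
  qed
  have J6: "\<exists>\<rho>\<in>nodes A. root A \<rho> = Some True \<and> lab A \<rho> = Some NSq \<and>
       (\<forall>v\<in>nodes A. root A v = Some True \<longrightarrow> v = \<rho>) \<and>
       (\<forall>v\<in>nodes A. lab A v = Some NTri \<longrightarrow> (\<exists>es. es \<noteq> [] \<and> dwalk A v es \<rho>))"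
  proof (intro bexI conjI ballI impI)
    show "Inl u \<in> nodes A" "root A (Inl u) = Some True" "lab A (Inl u) = Some NSq" using nA uv rA lA by auto
    fix x assume x: "x \<in> nodes A"
    then obtain a where a: "a \<in> nodes G" "a \<noteq> v" "x = Inl a" using nA by auto
    { assume "root A x = Some True"
      then have "root A (Inl a) = Some True" using a by simp
      then have "a = u \<or> root G a = Some True" unfolding rA by (simp split: if_splits)
      then show "x = Inl u" using a \<rho>(4) v\<rho> by blast }
    { assume "lab A x = Some NTri"
      then have au: "a \<noteq> u" and "lab G a = Some NTri" using a(3) lA[of a] by (auto split: if_splits)
      then obtain es where es: "es \<noteq> []" "dwalk G a es v" using a(1) \<rho>(5) v\<rho> by blast
      then obtain es1 el where es1: "es = es1 @ [el]" by (metis rev_exhaust)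
      with es obtain z where "dwalk G a es1 z" "el \<in> edges G" "src G el = z" "tgt G el = v"
        by (auto simp: dwalk_append)
      moreover have "el = e" using calculation dang by auto
      ultimately have w: "dwalk G a es1 u" using e by auto
      then have "es1 \<noteq> []" using au by auto
      moreover have "dwalk ?G' a es1 u" using dwalk_restrict[OF e(1,2,3) uv(3) dang w] uv by auto
      ultimately show "\<exists>es. es \<noteq> [] \<and> dwalk A x es (Inl u)" using dwalk_hom[OF hom] a
        by (metis Nil_is_map_conv) }
  qed
  show ?thesis unfolding ginv_def using J2 J3' J4 J5 J6 by blast
qed

lemma inv_r2gen:
  fixes G :: "('v, 'e) graph" and A :: "('v + 'a, 'e + 'b) graph"
  assumes ginv: "ginv G" and wf: "wf_graph G"
    and uv: "u \<in> nodes G" "w \<in> nodes G" "u \<noteq> w"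
    and e: "e \<in> edges G" "src G e = u" "tgt G e = w"
    and ru: "root G u = Some True" and lw: "lab G w = Some NSq"
    and nA: "nodes A = Inl ` nodes G"
    and eA: "edges A = Inl ` (edges G - {e}) \<union> {Inr c}"
    and sA: "\<And>e'. src A (Inl e') = Inl (src G e')"
    and tA: "\<And>e'. tgt A (Inl e') = Inl (tgt G e')"
    and sc: "src A (Inr c) = Inl u" and tc: "tgt A (Inr c) = Inl w"
    and lA: "\<And>x. lab A (Inl x) = (if x = u then Some NTri else lab G x)"
    and rA: "\<And>x. root A (Inl x) = (if x = u then Some False else if x = w then Some True else root G x)"
  shows "ginv A"
proof -
  define \<phi> where "\<phi> e' = (if e' = e then Inr c else Inl e')" for e'
  have hom: "\<forall>e'\<in>edges G. \<phi> e' \<in> edges A \<and> src A (\<phi> e') = Inl (src G e') \<and> tgt A (\<phi> e') = Inl (tgt G e')"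
    "\<forall>x\<in>nodes G. Inl x \<in> nodes A" using nA eA sA tA sc tc e unfolding \<phi>_def by auto
  have eA': "edges A = \<phi> ` edges G" using eA e unfolding \<phi>_def by auto
  from ginv have I5: "\<forall>e\<in>edges G. src G e \<in> nodes G \<and> tgt G e \<in> nodes G"
    and I2: "\<forall>e1\<in>edges G. \<forall>e2\<in>edges G. tgt G e1 = tgt G e2 \<longrightarrow> e1 = e2"
    and I4: "uconnected G" unfolding ginv_def by blast+
  from ginv obtain d :: "_ \<Rightarrow> nat" where I3: "\<forall>e\<in>edges G. d (src G e) < d (tgt G e)" unfolding ginv_def by blast
  from ginv obtain \<rho> where \<rho>: "\<rho> \<in> nodes G" "root G \<rho> = Some True" "lab G \<rho> = Some NSq"
    "\<forall>v\<in>nodes G. root G v = Some True \<longrightarrow> v = \<rho>"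
    "\<forall>v\<in>nodes G. lab G v = Some NTri \<longrightarrow> (\<exists>es. es \<noteq> [] \<and> dwalk G v es \<rho>)"
    unfolding ginv_def by blast
  have u\<rho>: "u = \<rho>" using \<rho>(4) ru uv(1) by blast
  have J5: "\<forall>e\<in>edges A. src A e \<in> nodes A \<and> tgt A e \<in> nodes A" using I5 eA' hom by auto
  have J2: "\<forall>e1\<in>edges A. \<forall>e2\<in>edges A. tgt A e1 = tgt A e2 \<longrightarrow> e1 = e2"
    using I2 eA' hom by fastforce
  have J3: "\<forall>e\<in>edges A. (case_sum d (\<lambda>_. 0)) (src A e) < (case_sum d (\<lambda>_. 0)) (tgt A e)"
    using I3 eA' hom by auto
  then have J3': "\<exists>d::_\<Rightarrow>nat. \<forall>e\<in>edges A. d (src A e) < d (tgt A e)" by (rule exI[of _ "case_sum d (\<lambda>_. 0)"])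
  have J4: "uconnected A" unfolding uconnected_def
  proof (intro ballI)
    fix x y assume "x \<in> nodes A" "y \<in> nodes A"
    then obtain a b where ab: "a \<in> nodes G" "b \<in> nodes G" "x = Inl a" "y = Inl b" using nA by auto
    then obtain es where "uwalk G a es b" using I4 unfolding uconnected_def by blast
    then show "\<exists>es. uwalk A x es y" using uwalk_hom[OF hom] ab by blast
  qed
  have J6: "\<exists>\<rho>\<in>nodes A. root A \<rho> = Some True \<and> lab A \<rho> = Some NSq \<and>
       (\<forall>v\<in>nodes A. root A v = Some True \<longrightarrow> v = \<rho>) \<and>
       (\<forall>v\<in>nodes A. lab A v = Some NTri \<longrightarrow> (\<exists>es. es \<noteq> [] \<and> dwalk A v es \<rho>))"
  proof (intro bexI conjI ballI impI)
    show "Inl w \<in> nodes A" "root A (Inl w) = Some True" "lab A (Inl w) = Some NSq" using nA uv rA lA lw by auto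
    fix x assume x: "x \<in> nodes A"
    then obtain a where a: "a \<in> nodes G" "x = Inl a" using nA by auto
    { assume "root A x = Some True"
      then have "root A (Inl a) = Some True" using a by simp
      then have "a = w \<or> (a \<noteq> u \<and> root G a = Some True)" unfolding rA by (simp split: if_splits)
      then show "x = Inl w" using a(1,2) \<rho>(4) u\<rho> by blast }
    { assume "lab A x = Some NTri"
      show "\<exists>es. es \<noteq> [] \<and> dwalk A x es (Inl w)"
      proof (cases "a = u")
        case True
        then show ?thesis using a sc tc eA by (intro exI[of _ "[Inr c]"]) simp
      next
        case False
        then have "lab G a = Some NTri" using a lA[of a] \<open>lab A x = Some NTri\<close> by simp
        then obtain es where es: "es \<noteq> []" "dwalk G a es u" using a(1) \<rho>(5) u\<rho> by blast
        then have "dwalk G a (es @ [e]) w" using e by (auto simp: dwalk_append)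
        then have "dwalk A (Inl a) (map \<phi> (es @ [e])) (Inl w)" using dwalk_hom[OF hom] by blast
        then show ?thesis using a by (intro exI[of _ "map \<phi> (es @ [e])"]) auto
      qed }
  qed
  show ?thesis unfolding ginv_def using J2 J3' J4 J5 J6 by blast
qed


lemma inv_into_single[simp]: "inv_into {a} f (f a) = a"
  by (rule inv_into_f_f) auto

lemma inv_step01:
  assumes ginv: "ginv G" and wf: "wf_graph G" and m: "is_match r G gV gE" and r: "r = r0 \<or> r = r1"
  shows "ginv (apply_rule r G gV gE)"
proof -
  have f: "gV 1 \<in> nodes G" "gV 2 \<in> nodes G" "gV 1 \<noteq> gV 2" "gE 0 \<in> edges G"
    "src G (gE 0) = gV 1" "tgt G (gE 0) = gV 2" "root G (gV 2) = Some True"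
    "\<forall>e'\<in>edges G. e' \<noteq> gE 0 \<longrightarrow> src G e' \<noteq> gV 2 \<and> tgt G e' \<noteq> gV 2"
    using m r unfolding is_match_def morphism_def r0_def r1_def by auto
  have KR: "rK r = rK r0" "rR r = rR r0" using r by (auto simp: r0_def r1_def)
  have NL: "nodes (rL r) = {1, 2}" "edges (rL r) = {0}" using r by (auto simp: r0_def r1_def)
  let ?A = "apply_rule r G gV gE"
  have A: "nodes ?A = Inl ` (nodes G - {gV 2})" "edges ?A = Inl ` (edges G - {gE 0})"
    "\<And>e'. src ?A (Inl e') = Inl (src G e')" "\<And>e'. tgt ?A (Inl e') = Inl (tgt G e')"
    by (simp_all add: apply_rule_def Let_def KR NL r0_def)
  have lA: "\<And>x. lab ?A (Inl x) = (if x = gV 1 then Some NSq else lab G x)"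
    and rA: "\<And>x. root ?A (Inl x) = (if x = gV 1 then Some True else root G x)"
    subgoal for x by (cases "x = gV 1") (simp_all add: apply_rule_def Let_def KR NL r0_def)
    subgoal for x by (cases "x = gV 1") (simp_all add: apply_rule_def Let_def KR NL r0_def)
    done
  show ?thesis
    by (rule inv_leafdel[OF ginv wf f(1,2,3,4,5,6,7,8) A lA rA])
qed

lemma inv_step2:
  assumes ginv: "ginv G" and wf: "wf_graph G" and m: "is_match r2 G gV gE"
  shows "ginv (apply_rule r2 G gV gE)"
proof -
  have f: "gV 1 \<in> nodes G" "gV 2 \<in> nodes G" "gV 1 \<noteq> gV 2" "gE 0 \<in> edges G"
    "src G (gE 0) = gV 1" "tgt G (gE 0) = gV 2" "root G (gV 1) = Some True"
    "lab G (gV 2) = Some NSq" "root G (gV 2) = Some False"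
    using m unfolding is_match_def morphism_def r2_def by auto
  have inj: "inj_on gV {1, 2}" using m unfolding is_match_def r2_def by simp
  have i1: "inv_into {1, 2} gV (gV 1) = 1" and i2: "inv_into {1, 2} gV (gV 2) = 2"
    using inv_into_f_f[OF inj] by auto
  let ?A = "apply_rule r2 G gV gE"
  have A: "nodes ?A = Inl ` nodes G" "edges ?A = Inl ` (edges G - {gE 0}) \<union> {Inr 0}"
    "\<And>e'. src ?A (Inl e') = Inl (src G e')" "\<And>e'. tgt ?A (Inl e') = Inl (tgt G e')"
    "src ?A (Inr 0) = Inl (gV 1)" "tgt ?A (Inr 0) = Inl (gV 2)"
    by (simp_all add: apply_rule_def Let_def r2_def)
  have lA: "\<And>x. lab ?A (Inl x) = (if x = gV 1 then Some NTri else lab G x)"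
    and rA: "\<And>x. root ?A (Inl x) = (if x = gV 1 then Some False else if x = gV 2 then Some True else root G x)"
    subgoal for x using f i1 i2 by (cases "x = gV 1"; cases "x = gV 2") (simp_all add: apply_rule_def Let_def r2_def)
    subgoal for x using f i1 i2 by (cases "x = gV 1"; cases "x = gV 2") (simp_all add: apply_rule_def Let_def r2_def)
    done
  show ?thesis
    by (rule inv_r2gen[OF ginv wf f(1,2,3,4,5,6,7,8) A lA rA])
qed

lemma inv_step:
  assumes "dstep {r0, r1, r2} G H" "ginv G"
  shows "ginv H"
proof -
  obtain r gV gE where d: "tlrg G" "r \<in> {r0, r1, r2}" "is_match r G gV gE"
    "graph_iso (apply_rule r G gV gE) H"
    using assms(1) unfolding dstep_def by blast
  have wf: "wf_graph G" using d(1) unfolding tlrg_def by blast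
  have "ginv (apply_rule r G gV gE)"
    using d(2,3) inv_step01[OF assms(2) wf] inv_step2[OF assms(2) wf] by blast
  then show ?thesis using inv_iso d(4) by blast
qed


lemma ginv_init:
  assumes "input_tree G"
  shows "ginv G"
proof -
  have tl: "tlrg G" and c1: "card {v \<in> nodes G. root G v = Some True} = 1"
    and lb: "\<forall>v\<in>nodes G. lab G v = Some NSq" and tr: "is_tree G"
    using assms unfolding input_tree_def input_graph_def by auto
  have wf: "wf_graph G" using tl unfolding tlrg_def by blast
  then have fin: "finite (edges G)" and I5: "\<forall>e\<in>edges G. src G e \<in> nodes G \<and> tgt G e \<in> nodes G"
    unfolding wf_graph_def by auto
  have indeg: "\<forall>v\<in>nodes G. card {e \<in> edges G. tgt G e = v} \<le> 1"
    and nc: "\<not> has_ucycle G" and I4: "uconnected G" using tr unfolding is_tree_def by auto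
  have I2: "\<forall>e1\<in>edges G. \<forall>e2\<in>edges G. tgt G e1 = tgt G e2 \<longrightarrow> e1 = e2"
  proof (intro ballI impI)
    fix e1 e2 assume e: "e1 \<in> edges G" "e2 \<in> edges G" "tgt G e1 = tgt G e2"
    let ?S = "{e \<in> edges G. tgt G e = tgt G e1}"
    have fS: "finite ?S" using fin by simp
    have "tgt G e1 \<in> nodes G" using I5 e(1) by blast
    then have "card ?S \<le> Suc 0" using indeg by simp
    then have "\<forall>a\<in>?S. \<forall>b\<in>?S. a = b" using card_le_Suc0_iff_eq[OF fS] by blast
    moreover have "e1 \<in> ?S" "e2 \<in> ?S" using e by auto
    ultimately show "e1 = e2" by blast
  qed
  obtain d :: "_ \<Rightarrow> nat" where I3: "\<forall>e\<in>edges G. d (src G e) < d (tgt G e)"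
    using rank_exists[OF wf nc] by blast
  obtain \<rho> where \<rho>: "{v \<in> nodes G. root G v = Some True} = {\<rho>}" using c1 by (rule card_1_singletonE)
  have J6: "\<exists>\<rho>\<in>nodes G. root G \<rho> = Some True \<and> lab G \<rho> = Some NSq \<and>
       (\<forall>v\<in>nodes G. root G v = Some True \<longrightarrow> v = \<rho>) \<and>
       (\<forall>v\<in>nodes G. lab G v = Some NTri \<longrightarrow> (\<exists>es. es \<noteq> [] \<and> dwalk G v es \<rho>))"
  proof -
    have r1: "\<rho> \<in> nodes G" "root G \<rho> = Some True" using \<rho> by auto
    have r2: "\<forall>v\<in>nodes G. root G v = Some True \<longrightarrow> v = \<rho>" using \<rho> by auto
    have r3: "lab G \<rho> = Some NSq" using lb r1 by blast
    have r4: "\<forall>v\<in>nodes G. lab G v \<noteq> Some NTri" using lb by simp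
    show ?thesis using r1 r2 r3 r4 by blast
  qed
  have I3': "\<exists>d::_\<Rightarrow>nat. \<forall>e\<in>edges G. d (src G e) < d (tgt G e)" using I3 by (rule exI[of _ d])
  show ?thesis unfolding ginv_def using I2 I3' I4 I5 J6 by blast
qed

lemma dwalk_rank:
  assumes "\<forall>e\<in>edges G. d (src G e) < (d (tgt G e) :: nat)"
  shows "dwalk G x es y \<Longrightarrow> es \<noteq> [] \<Longrightarrow> d x < d y"
proof (induction es arbitrary: x)
  case (Cons e es)
  have h: "e \<in> edges G" "src G e = x" "dwalk G (tgt G e) es y" using Cons.prems(1) by auto
  have lt: "d x < d (tgt G e)" using assms h(1,2) by blast
  show ?case
  proof (cases "es = []")
    case True then show ?thesis using h(3) lt by simp
  next
    case False then show ?thesis using Cons.IH[OF h(3) False] lt by linarith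
  qed
qed simp

lemma ginv_final:
  assumes "ginv H" "tlrg H"
  shows "card (nodes H) = 1 \<or> (\<exists>r\<in>{r0, r1, r2}. \<exists>gV gE. is_match r H gV gE)"
proof -
  from assms(1) have I5: "\<forall>e\<in>edges H. src H e \<in> nodes H \<and> tgt H e \<in> nodes H"
    and I2: "\<forall>e1\<in>edges H. \<forall>e2\<in>edges H. tgt H e1 = tgt H e2 \<longrightarrow> e1 = e2"
    and I4: "uconnected H" unfolding ginv_def by blast+
  from assms(1) obtain d :: "_ \<Rightarrow> nat" where I3: "\<forall>e\<in>edges H. d (src H e) < d (tgt H e)" unfolding ginv_def by blast
  from assms(1) obtain \<rho> where \<rho>: "\<rho> \<in> nodes H" "root H \<rho> = Some True" "lab H \<rho> = Some NSq"
    "\<forall>v\<in>nodes H. root H v = Some True \<longrightarrow> v = \<rho>"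
    "\<forall>v\<in>nodes H. lab H v = Some NTri \<longrightarrow> (\<exists>es. es \<noteq> [] \<and> dwalk H v es \<rho>)"
    unfolding ginv_def by blast
  have fin: "finite (nodes H)" and tot: "\<forall>v\<in>nodes H. lab H v \<noteq> None \<and> root H v \<noteq> None"
    using assms(2) unfolding tlrg_def wf_graph_def by auto
  have el: "elab H e = ESq" for e by (cases "elab H e") simp
  show ?thesis
  proof (cases "card (nodes H) = 1")
    case False
    then have "nodes H \<noteq> {\<rho>}" by auto
    then obtain w where w: "w \<in> nodes H" "w \<noteq> \<rho>" using \<rho>(1) by blast
    then obtain es where "uwalk H \<rho> es w" using I4 \<rho>(1) unfolding uconnected_def by blast
    with w obtain e es' where e: "e \<in> edges H" "src H e = \<rho> \<or> tgt H e = \<rho>"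
      by (cases es) auto
    show ?thesis
    proof (cases "\<exists>e\<in>edges H. src H e = \<rho>")
      case True
      then obtain e where e: "e \<in> edges H" "src H e = \<rho>" by blast
      let ?w = "tgt H e"
      have wn: "?w \<in> nodes H" using I5 e by auto
      have wne: "?w \<noteq> \<rho>" using I3 e by fastforce
      have rw: "root H ?w = Some False" using \<rho>(4) tot wn wne by (cases "root H ?w") auto
      have lw: "lab H ?w = Some NSq"
      proof -
        obtain l where l: "lab H ?w = Some l" using tot wn by auto
        have "l \<noteq> NTri"
        proof
          assume "l = NTri"
          then obtain es where "es \<noteq> []" "dwalk H ?w es \<rho>" using \<rho>(5) wn l by auto
          then have "d ?w < d \<rho>" using dwalk_rank[OF I3] by blast
          moreover have "d \<rho> < d ?w" using I3 e by fastforce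
          ultimately show False by simp
        qed
        then show ?thesis using l by (cases l) auto
      qed
      have "is_match r2 H (\<lambda>i. if i = 1 then \<rho> else ?w) (\<lambda>_. e)"
        unfolding is_match_def morphism_def r2_def
        using e wn wne rw lw \<rho>(1,2,3) el by (auto simp: inj_on_def)
      then show ?thesis by blast
    next
      case False
      with e have t: "tgt H e = \<rho>" by auto
      let ?u = "src H e"
      have un: "?u \<in> nodes H" using I5 e by auto
      have une: "?u \<noteq> \<rho>" using False e by auto
      have ru: "root H ?u = Some False" using \<rho>(4) tot un une by (cases "root H ?u") auto
      obtain l where l: "lab H ?u = Some l" using tot un by auto
      have dang: "\<forall>e'\<in>edges H. e' \<noteq> e \<longrightarrow> src H e' \<noteq> \<rho> \<and> tgt H e' \<noteq> \<rho>"
      proof (intro ballI impI)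
        fix e' assume e': "e' \<in> edges H" "e' \<noteq> e"
        have "src H e' \<noteq> \<rho>" using False e'(1) by blast
        moreover have "tgt H e' \<noteq> \<rho>" using I2 e'(1) e(1) e'(2) t by blast
        ultimately show "src H e' \<noteq> \<rho> \<and> tgt H e' \<noteq> \<rho>" by blast
      qed
      show ?thesis
      proof (cases l)
        case NSq
        have "is_match r0 H (\<lambda>i. if i = 1 then ?u else \<rho>) (\<lambda>_. e)"
          unfolding is_match_def morphism_def r0_def
          using e t un une ru l NSq \<rho>(1,2,3) el dang by (auto simp: inj_on_def)
        then show ?thesis by blast
      next
        case NTri
        have "is_match r1 H (\<lambda>i. if i = 1 then ?u else \<rho>) (\<lambda>_. e)"
          unfolding is_match_def morphism_def r1_def
          using e t un une ru l NTri \<rho>(1,2,3) el dang by (auto simp: inj_on_def)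
        then show ?thesis by blast
      qed
    qed
  qed simp
qed

theorem lemma4p9:
  fixes G H :: "(nat, nat) graph"
  assumes "input_tree G"
    and "tlrg H"
    and "(dstep {r0, r1, r2})\<^sup>*\<^sup>* G H"
  shows "card (nodes H) = 1 \<or> (\<exists>r\<in>{r0, r1, r2}. \<exists>gV gE. is_match r H gV gE)"
proof -
  have "ginv H" using assms(3)
  proof (induction rule: rtranclp_induct)
    case base
    then show ?case using ginv_init[OF assms(1)] .
  next
    case (step y z)
    then show ?case using inv_step by blast
  qed
  then show ?thesis using ginv_final assms(2) by blast
qed


end
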